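(* Let $(X,\mathrm{dist})$ be a metric space and $\Sigma$ a compact metric space. Let $T(h):\Sigma\to\Sigma$, $h\ge0$, be a semigroup with $T(h)\Sigma=\Sigma$ for all $h\ge0$, and let $\{U_\sigma(t,\tau)\}_{\sigma\in\Sigma}$ be a family of processes on $X$ satisfying $U_\sigma(h+t,h+\tau)=U_{T(h)\sigma}(t,\tau)$ for all $\sigma\in\Sigma$, $h\ge0$, $t\ge\tau$. Assume the family is uniformly asymptotically compact (which, when $X$ is complete, is equivalent to being totally uniformly dissipative), and let $A_\Sigma$ be its uniform global attractor. If the family is asymptotically closed with respect to some sequence $h_k$ and $T(h_k)$ is continuous for every $k$, then $A_\Sigma=\bigcup_{\sigma\in\Sigma}\mathcal{K}_\sigma(0)$.
   Context: A process on $X$ is a family of maps $U(t,\tau):X\to X$, indexed by reals $t\ge\tau$, with $U(\tau,\tau)=\mathrm{id}_X$ and $U(t,\tau)=U(t,s)U(s,\tau)$ for $t\ge s\ge\tau$. For nonempty $B,C\subset X$, $\delta_X(B,C)=\sup_{x\in B}\inf_{\xi\in C}\mathrm{dist}(x,\xi)$. A set $K\subset X$ is uniformly attracting if for every bounded $C\subset X$, $\lim_{t-\tau\to\infty}\sup_{\sigma\in\Sigma}\delta_X(U_\sigma(t,\tau)C,K)=0$. The family is uniformly asymptotically compact if there is a compact uniformly attracting set; the uniform global attractor $A_\Sigma$ is the compact uniformly attracting set contained in every compact uniformly attracting set. Total uniform dissipativity: for every $\varepsilon>0$ there is a finite set $M_\varepsilon\subset X$ such that its open $\varepsilon$-neighborhood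 is uniformly absorbing, i.e. for every bounded $C\subset X$ there is $t_e$ with $U_\sigma(t,\tau)C$ contained in it for all $\sigma$ whenever $t-\tau\ge t_e$. The family is asymptotically closed with respect to a (finite with at least two terms, or infinite) sequence $0=h_0<h_1<h_2<\cdots$ if whenever $\sigma_n\to\sigma\in\Sigma$ and $U_{\sigma_n}(h_k,0)x_n\to\xi^k\in X$ as $n\to\infty$ for every $k$, then $U_\sigma(h_k,0)\xi^0=\xi^k$ for every $k$. For $\sigma\in\Sigma$, a complete bounded trajectory of $U_\sigma(t,\tau)$ is a function $x:\mathbb{R}\to X$ with bounded range and $x(s)=U_\sigma(s,\tau)x(\tau)$ for all $s\ge\tau$, $\tau\in\mathbb{R}$; $\mathcal{K}_\sigma(t)=\{x(t): x$ a complete bounded trajectory of $U_\sigma(t,\tau)\}$. *)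

theory Defs
  imports "HOL-Analysis.Analysis"
begin

text \<open>A family of processes on X (the whole type 'a), indexed by symbols in the
carrier set Sig. U sigma t tau is the map U_sigma(t,tau), meaningful for tau \<le> t.\<close>

definition process_family :: "'b set \<Rightarrow> ('b \<Rightarrow> real \<Rightarrow> real \<Rightarrow> 'a \<Rightarrow> 'a) \<Rightarrow> bool" where
  "process_family Sig U \<longleftrightarrow>
     (\<forall>\<sigma>\<in>Sig. (\<forall>\<tau>. U \<sigma> \<tau> \<tau> = id) \<and>
        (\<forall>t s \<tau>. \<tau> \<le> s \<and> s \<le> t \<longrightarrow> U \<sigma> t \<tau> = U \<sigma> t s \<circ> U \<sigma> s \<tau>))"

definition semigroup_on :: "'b set \<Rightarrow> (real \<Rightarrow> 'b \<Rightarrow> 'b) \<Rightarrow> bool" where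
  "semigroup_on Sig T \<longleftrightarrow>
     (\<forall>h\<ge>0. T h ` Sig \<subseteq> Sig) \<and>
     (\<forall>\<sigma>\<in>Sig. T 0 \<sigma> = \<sigma>) \<and>
     (\<forall>h1\<ge>0. \<forall>h2\<ge>0. \<forall>\<sigma>\<in>Sig. T (h1 + h2) \<sigma> = T h1 (T h2 \<sigma>))"

text \<open>Uniform attraction: for each bounded C,
  lim_{t-tau\<rightarrow>\<infinity>} sup_sigma delta(U_sigma(t,tau) C, K) = 0, written out with epsilons
  (delta(B,K) < eps for all large t - tau iff every point of B is eps-close to some point of K).\<close>

definition uniformly_attracting :: "'b set \<Rightarrow> ('b \<Rightarrow> real \<Rightarrow> real \<Rightarrow> 'a::metric_space \<Rightarrow> 'a) \<Rightarrow> 'a set \<Rightarrow> bool" where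
  "uniformly_attracting Sig U K \<longleftrightarrow>
     (\<forall>C. bounded C \<longrightarrow>
        (\<forall>\<epsilon>>0. \<exists>L. \<forall>t \<tau>. \<tau> \<le> t \<and> t - \<tau> \<ge> L \<longrightarrow>
           (\<forall>\<sigma>\<in>Sig. \<forall>x\<in>C. \<exists>k\<in>K. dist (U \<sigma> t \<tau> x) k < \<epsilon>)))"

definition uniformly_asymptotically_compact :: "'b set \<Rightarrow> ('b \<Rightarrow> real \<Rightarrow> real \<Rightarrow> 'a::metric_space \<Rightarrow> 'a) \<Rightarrow> bool" where
  "uniformly_asymptotically_compact Sig U \<longleftrightarrow> (\<exists>K. compact K \<and> uniformly_attracting Sig U K)"

definition uniform_global_attractor :: "'b set \<Rightarrow> ('b \<Rightarrow> real \<Rightarrow> real \<Rightarrow> 'a::metric_space \<Rightarrow> 'a) \<Rightarrow> 'a set \<Rightarrow> bool" where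
  "uniform_global_attractor Sig U A \<longleftrightarrow>
     compact A \<and> uniformly_attracting Sig U A \<and>
     (\<forall>K. compact K \<and> uniformly_attracting Sig U K \<longrightarrow> A \<subseteq> K)"

text \<open>Admissible sequence 0 = h_0 < h_1 < ...: indexed by I, which is either all of nat
  (infinite sequence) or {..<n} with n \<ge> 2 (finite sequence with at least two terms).\<close>

definition admissible_seq :: "nat set \<Rightarrow> (nat \<Rightarrow> real) \<Rightarrow> bool" where
  "admissible_seq I h \<longleftrightarrow> (I = UNIV \<or> (\<exists>n\<ge>2. I = {..<n})) \<and> h 0 = 0 \<and> strict_mono_on I h"

definition asymptotically_closed :: "'b::metric_space set \<Rightarrow> ('b \<Rightarrow> real \<Rightarrow> real \<Rightarrow> 'a::metric_space \<Rightarrow> 'a) \<Rightarrow> nat set \<Rightarrow> (nat \<Rightarrow> real) \<Rightarrow> bool" where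
  "asymptotically_closed Sig U I h \<longleftrightarrow>
     (\<forall>\<sigma>s \<sigma> xs \<xi>. (\<forall>n. \<sigma>s n \<in> Sig) \<and> \<sigma> \<in> Sig \<and> \<sigma>s \<longlonglongrightarrow> \<sigma> \<and>
        (\<forall>k\<in>I. (\<lambda>n. U (\<sigma>s n) (h k) 0 (xs n)) \<longlonglongrightarrow> \<xi> k)
        \<longrightarrow> (\<forall>k\<in>I. U \<sigma> (h k) 0 (\<xi> 0) = \<xi> k))"

definition complete_bounded_trajectory :: "('b \<Rightarrow> real \<Rightarrow> real \<Rightarrow> 'a::metric_space \<Rightarrow> 'a) \<Rightarrow> 'b \<Rightarrow> (real \<Rightarrow> 'a) \<Rightarrow> bool" where
  "complete_bounded_trajectory U \<sigma> x \<longleftrightarrow>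
     bounded (range x) \<and> (\<forall>s \<tau>. \<tau> \<le> s \<longrightarrow> x s = U \<sigma> s \<tau> (x \<tau>))"

definition kernel_section :: "('b \<Rightarrow> real \<Rightarrow> real \<Rightarrow> 'a::metric_space \<Rightarrow> 'a) \<Rightarrow> 'b \<Rightarrow> real \<Rightarrow> 'a set" where
  "kernel_section U \<sigma> t = {x t | x. complete_bounded_trajectory U \<sigma> x}"

end

theory Submission
  imports Defs "HOL-Library.Diagonal_Subsequence"
begin

locale ctx =
  fixes Sig :: "'b::metric_space set"
    and T :: "real \<Rightarrow> 'b \<Rightarrow> 'b"
    and U :: "'b \<Rightarrow> real \<Rightarrow> real \<Rightarrow> 'a::metric_space \<Rightarrow> 'a"
    and A :: "'a set"
    and I :: "nat set" and hh :: "nat \<Rightarrow> real"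
  assumes cSig: "compact Sig"
    and Tmap: "\<And>h. 0 \<le> h \<Longrightarrow> T h ` Sig = Sig"
    and T0: "\<And>\<sigma>. \<sigma> \<in> Sig \<Longrightarrow> T 0 \<sigma> = \<sigma>"
    and Tadd: "\<And>h1 h2 \<sigma>. 0 \<le> h1 \<Longrightarrow> 0 \<le> h2 \<Longrightarrow> \<sigma> \<in> Sig \<Longrightarrow> T (h1 + h2) \<sigma> = T h1 (T h2 \<sigma>)"
    and Uid: "\<And>\<sigma> \<tau>. \<sigma> \<in> Sig \<Longrightarrow> U \<sigma> \<tau> \<tau> = id"
    and Ucomp: "\<And>\<sigma> t s \<tau>. \<sigma> \<in> Sig \<Longrightarrow> \<tau> \<le> s \<Longrightarrow> s \<le> t \<Longrightarrow> U \<sigma> t \<tau> = U \<sigma> t s \<circ> U \<sigma> s \<tau>"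
    and shift: "\<And>\<sigma> h t \<tau>. \<sigma> \<in> Sig \<Longrightarrow> 0 \<le> h \<Longrightarrow> \<tau> \<le> t \<Longrightarrow> U \<sigma> (h + t) (h + \<tau>) = U (T h \<sigma>) t \<tau>"
    and cA: "compact A"
    and attA: "uniformly_attracting Sig U A"
    and minA: "\<And>K. compact K \<Longrightarrow> uniformly_attracting Sig U K \<Longrightarrow> A \<subseteq> K"
    and h0: "hh 0 = 0" and h1pos: "0 < hh 1" and hnn: "\<And>k. k \<in> I \<Longrightarrow> 0 \<le> hh k"
    and oneI: "1 \<in> I"
    and clos: "asymptotically_closed Sig U I hh"
    and cont: "continuous_on Sig (T (hh 1))"
begin

lemma TSig: "0 \<le> h \<Longrightarrow> \<sigma> \<in> Sig \<Longrightarrow> T h \<sigma> \<in> Sig"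
  using Tmap by blast

definition near :: "(nat \<Rightarrow> 'a) \<Rightarrow> bool" where
  "near f \<longleftrightarrow> (\<forall>\<epsilon>>0. eventually (\<lambda>n. \<exists>k\<in>A. dist (f n) k < \<epsilon>) sequentially)"

lemma near_subseq: "near f \<Longrightarrow> strict_mono r \<Longrightarrow> near (f \<circ> r)"
  unfolding near_def using eventually_subseq by fastforce

lemma closedA: "closed A" using cA compact_imp_closed by blast

lemma near_lim: assumes "near f" "f \<longlonglongrightarrow> l" shows "l \<in> A"
proof -
  have "l \<in> closure A"
    unfolding closure_approachable
  proof (intro allI impI)
    fix e :: real assume e: "e > 0"
    have "eventually (\<lambda>n. dist (f n) l < e/2) sequentially"
      using assms(2) e unfolding tendsto_iff by (meson half_gt_zero)
    moreover have "eventually (\<lambda>n. \<exists>k\<in>A. dist (f n) k < e/2) sequentially"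
      using assms(1) e unfolding near_def by (meson half_gt_zero)
    ultimately have "eventually (\<lambda>n. dist (f n) l < e/2 \<and> (\<exists>k\<in>A. dist (f n) k < e/2)) sequentially"
      by (rule eventually_conj)
    then obtain N where "\<forall>n\<ge>N. dist (f n) l < e/2 \<and> (\<exists>k\<in>A. dist (f n) k < e/2)"
      unfolding eventually_sequentially by blast
    hence "dist (f N) l < e/2 \<and> (\<exists>k\<in>A. dist (f N) k < e/2)" by blast
    then obtain k where k: "k \<in> A" "dist (f N) k < e/2" "dist (f N) l < e/2" by blast
    have "dist k l \<le> dist k (f N) + dist (f N) l" by (rule dist_triangle)
    moreover have "dist k (f N) = dist (f N) k" by (rule dist_commute)
    ultimately have "dist k l < e" using k(2,3) by linarith
    thus "\<exists>y\<in>A. dist y l < e" using k(1) by blast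
  qed
  thus ?thesis using closedA by simp
qed

lemma near_conv: assumes "near f" shows "\<exists>r l. strict_mono r \<and> (f \<circ> r) \<longlonglongrightarrow> l"
proof -
  have "eventually (\<lambda>n. \<exists>k\<in>A. dist (f n) k < 1) sequentially"
    using assms unfolding near_def by simp
  then obtain N where "\<forall>n\<ge>N. \<exists>k\<in>A. dist (f n) k < 1"
    unfolding eventually_sequentially by blast
  hence ne: "A \<noteq> {}" by blast
  have "\<forall>n. \<exists>k. k \<in> A \<and> (\<forall>y\<in>A. dist (f n) k \<le> dist (f n) y)"
  proof
    fix n
    have "continuous_on A (dist (f n))" by (intro continuous_intros)
    from continuous_attains_inf[OF cA ne this] show "\<exists>k. k \<in> A \<and> (\<forall>y\<in>A. dist (f n) k \<le> dist (f n) y)"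
      by blast
  qed
  from choice[OF this] obtain g where g0: "\<forall>n. g n \<in> A \<and> (\<forall>y\<in>A. dist (f n) (g n) \<le> dist (f n) y)"
    by blast
  have g: "\<And>n. g n \<in> A" "\<And>n y. y \<in> A \<Longrightarrow> dist (f n) (g n) \<le> dist (f n) y"
    using g0 by blast+
  have "\<forall>n. g n \<in> A" using g(1) by blast
  from seq_compactE[OF compact_imp_seq_compact[OF cA] this]
  obtain l r where lr: "l \<in> A" "strict_mono r" "(g \<circ> r) \<longlonglongrightarrow> l" by blast
  have "(f \<circ> r) \<longlonglongrightarrow> l"
    unfolding tendsto_iff
  proof (intro allI impI)
    fix e :: real assume e: "e > 0"
    have "eventually (\<lambda>n. dist ((g \<circ> r) n) l < e/2) sequentially"
      using lr(3) e unfolding tendsto_iff by (meson half_gt_zero)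
    moreover have "eventually (\<lambda>n. \<exists>k\<in>A. dist (f (r n)) k < e/2) sequentially"
      using near_subseq[OF assms lr(2)] e unfolding near_def o_def by (meson half_gt_zero)
    ultimately show "eventually (\<lambda>n. dist ((f \<circ> r) n) l < e) sequentially"
    proof (rule eventually_elim2)
      fix n assume a: "dist ((g \<circ> r) n) l < e/2" and "\<exists>k\<in>A. dist (f (r n)) k < e/2"
      then obtain k where "k \<in> A" "dist (f (r n)) k < e/2" by blast
      hence "dist (f (r n)) (g (r n)) < e/2" using g(2)[of k "r n"] by linarith
      moreover have "dist (f (r n)) l \<le> dist (f (r n)) (g (r n)) + dist (g (r n)) l"
        by (rule dist_triangle)
      ultimately show "dist ((f \<circ> r) n) l < e" using a by simp
    qed
  qed
  thus ?thesis using lr(2) by blast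
qed

lemma attA':
  assumes "bounded C" "0 < e"
  shows "\<exists>L. \<forall>t \<tau> \<sigma> x. \<tau> \<le> t \<longrightarrow> L \<le> t - \<tau> \<longrightarrow> \<sigma> \<in> Sig \<longrightarrow> x \<in> C \<longrightarrow> (\<exists>k\<in>A. dist (U \<sigma> t \<tau> x) k < e)"
proof -
  obtain L where L: "\<forall>t \<tau>. \<tau> \<le> t \<and> L \<le> t - \<tau> \<longrightarrow> (\<forall>\<sigma>\<in>Sig. \<forall>x\<in>C. \<exists>k\<in>A. dist (U \<sigma> t \<tau> x) k < e)"
    using attA[unfolded uniformly_attracting_def, rule_format, OF assms] by blast
  show ?thesis by (rule exI[of _ L]) (use L in blast)
qed

lemma near_U:
  assumes "\<And>n. \<sigma>s n \<in> Sig" "bounded C" "\<And>n. w n \<in> C" "\<And>n. \<tau>s n \<le> ts n"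
    "filterlim (\<lambda>n. ts n - \<tau>s n) at_top sequentially"
  shows "near (\<lambda>n. U (\<sigma>s n) (ts n) (\<tau>s n) (w n))"
  unfolding near_def
proof (intro allI impI)
  fix e :: real assume e: "e > 0"
  obtain L where L: "\<And>t \<tau> \<sigma> x. \<tau> \<le> t \<Longrightarrow> t - \<tau> \<ge> L \<Longrightarrow> \<sigma> \<in> Sig \<Longrightarrow> x \<in> C \<Longrightarrow> \<exists>k\<in>A. dist (U \<sigma> t \<tau> x) k < e"
    using attA'[OF assms(2) e] by blast
  have "eventually (\<lambda>n. L \<le> ts n - \<tau>s n) sequentially"
    using assms(5) by (simp add: filterlim_at_top)
  thus "eventually (\<lambda>n. \<exists>k\<in>A. dist (U (\<sigma>s n) (ts n) (\<tau>s n) (w n)) k < e) sequentially"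
  proof eventually_elim
    case (elim n)
    show ?case using L[OF assms(4)[of n] elim assms(1)[of n] assms(3)[of n]] .
  qed
qed

lemma diag: fixes f :: "nat \<Rightarrow> nat \<Rightarrow> 'a" assumes "\<And>k. near (f k)" shows "\<exists>r. strict_mono r \<and> (\<forall>k. convergent (f k \<circ> r))"
proof -
  interpret S: subseqs "\<lambda>k s. convergent (f k \<circ> s)"
  proof
    fix k and s :: "nat \<Rightarrow> nat" assume "strict_mono s"
    from near_conv[OF near_subseq[OF assms this]] obtain r' l where
      "strict_mono r'" "(f k \<circ> s \<circ> r') \<longlonglongrightarrow> l" by blast
    thus "\<exists>r'. strict_mono r' \<and> convergent (f k \<circ> (s \<circ> r'))"
      by (auto simp: convergent_def o_assoc)
  qed
  have st: "convergent (f k \<circ> s \<circ> r)" if "strict_mono r" "convergent (f k \<circ> s)" for k s r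
    using that LIMSEQ_subseq_LIMSEQ unfolding convergent_def by blast
  have "convergent (f k \<circ> S.diagseq)" for k
  proof -
    have "convergent (f k \<circ> (S.diagseq \<circ> (+) (Suc k)))"
      by (rule S.diagseq_holds) (use st in \<open>auto simp: o_assoc\<close>)
    hence "convergent (\<lambda>n. (f k \<circ> S.diagseq) (n + Suc k))"
      by (simp add: o_def add.commute)
    thus ?thesis by (simp only: convergent_ignore_initial_segment)
  qed
  thus ?thesis using S.subseq_diagseq by blast
qed

lemma normalize:
  assumes "\<sigma> \<in> Sig" "\<tau> \<le> t"
  shows "\<exists>\<sigma>'\<in>Sig. U \<sigma> t \<tau> = U \<sigma>' (t - \<tau>) 0"
proof (cases "0 \<le> \<tau>")
  case True
  have "U \<sigma> (\<tau> + (t - \<tau>)) (\<tau> + 0) = U (T \<tau> \<sigma>) (t - \<tau>) 0"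
    by (rule shift) (use assms True in auto)
  thus ?thesis using TSig[OF True assms(1)] by auto
next
  case False
  hence "0 \<le> -\<tau>" by simp
  have "\<sigma> \<in> T (-\<tau>) ` Sig" using Tmap[OF \<open>0 \<le> -\<tau>\<close>] assms(1) by simp
  then obtain \<sigma>' where s: "\<sigma>' \<in> Sig" "T (-\<tau>) \<sigma>' = \<sigma>" by (auto simp: image_iff)
  have "U \<sigma>' (-\<tau> + t) (-\<tau> + \<tau>) = U (T (-\<tau>) \<sigma>') t \<tau>"
    using shift[OF s(1) \<open>0 \<le> -\<tau>\<close> assms(2)] .
  hence "U \<sigma>' (t - \<tau>) 0 = U \<sigma> t \<tau>" using s(2) by simp
  thus ?thesis using s(1) by (intro bexI[of _ \<sigma>']) auto
qed

definition B1 :: "'a set" where "B1 = {y. \<exists>k\<in>A. dist y k < 1}"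

lemma bounded_B1: "bounded B1"
proof -
  obtain x e where xe: "\<forall>y\<in>A. dist x y \<le> e" using compact_imp_bounded[OF cA] unfolding bounded_def by blast
  have "\<forall>y\<in>B1. dist x y \<le> e + 1"
  proof
    fix y assume "y \<in> B1"
    then obtain k where "k \<in> A" "dist y k < 1" unfolding B1_def by blast
    moreover have "dist x y \<le> dist x k + dist k y" by (rule dist_triangle)
    moreover have "dist x k \<le> e" using xe \<open>k \<in> A\<close> by blast
    moreover have "dist k y = dist y k" by (rule dist_commute)
    ultimately show "dist x y \<le> e + 1" by linarith
  qed
  thus ?thesis unfolding bounded_def by blast
qed

lemma absorb:
  assumes "bounded C"
  shows "\<exists>L. \<forall>t \<tau> \<sigma> x. \<tau> \<le> t \<longrightarrow> t - \<tau> \<ge> L \<longrightarrow> \<sigma> \<in> Sig \<longrightarrow> x \<in> C \<longrightarrow> U \<sigma> t \<tau> x \<in> B1"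
proof -
  obtain L where L: "\<forall>t \<tau> \<sigma> x. \<tau> \<le> t \<longrightarrow> L \<le> t - \<tau> \<longrightarrow> \<sigma> \<in> Sig \<longrightarrow> x \<in> C \<longrightarrow> (\<exists>k\<in>A. dist (U \<sigma> t \<tau> x) k < 1)"
    using attA'[OF assms zero_less_one] by blast
  show ?thesis unfolding B1_def by (rule exI[of _ L]) (use L in auto)
qed

lemma approx_claim:
  assumes "a \<in> A" "r > 0"
  shows "\<exists>\<sigma>\<in>Sig. \<exists>s\<ge>L. \<exists>x\<in>B1. dist (U \<sigma> s 0 x) a < r"
proof (rule ccontr)
  assume "\<not> ?thesis"
  hence far: "\<And>\<sigma> s x. \<sigma> \<in> Sig \<Longrightarrow> s \<ge> L \<Longrightarrow> x \<in> B1 \<Longrightarrow> dist (U \<sigma> s 0 x) a \<ge> r"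
    by (meson not_less)
  define A' where "A' = A - ball a (r/2)"
  have cA': "compact A'" unfolding A'_def using cA by (simp add: compact_diff)
  have "uniformly_attracting Sig U A'"
    unfolding uniformly_attracting_def
  proof (intro allI impI)
    fix C :: "'a set" and e :: real assume C: "bounded C" and e: "e > 0"
    obtain L1 where L1: "\<And>t \<tau> \<sigma> x. \<tau> \<le> t \<Longrightarrow> t - \<tau> \<ge> L1 \<Longrightarrow> \<sigma> \<in> Sig \<Longrightarrow> x \<in> C \<Longrightarrow> U \<sigma> t \<tau> x \<in> B1"
      using absorb[OF C] by blast
    have mpos: "0 < min e (r/2)" using e assms(2) by simp
    obtain L2 where L2: "\<And>t \<tau> \<sigma> x. \<tau> \<le> t \<Longrightarrow> t - \<tau> \<ge> L2 \<Longrightarrow> \<sigma> \<in> Sig \<Longrightarrow> x \<in> C \<Longrightarrow> \<exists>k\<in>A. dist (U \<sigma> t \<tau> x) k < min e (r/2)"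
      using attA'[OF C mpos] by blast
    show "\<exists>L. \<forall>t \<tau>. \<tau> \<le> t \<and> L \<le> t - \<tau> \<longrightarrow> (\<forall>\<sigma>\<in>Sig. \<forall>x\<in>C. \<exists>k\<in>A'. dist (U \<sigma> t \<tau> x) k < e)"
    proof (intro exI[of _ "max L1 0 + max L 0 + max L2 0"] allI impI ballI)
      fix t \<tau> \<sigma> x assume tt: "\<tau> \<le> t \<and> max L1 0 + max L 0 + max L2 0 \<le> t - \<tau>" and \<sigma>: "\<sigma> \<in> Sig" and x: "x \<in> C"
      define s where "s = \<tau> + max L1 0"
      have y: "U \<sigma> s \<tau> x \<in> B1" using L1[of \<tau> s \<sigma> x] \<sigma> x by (simp add: s_def)
      have st: "\<tau> \<le> s" "s \<le> t" using tt by (auto simp: s_def)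
      have eq: "U \<sigma> t \<tau> x = U \<sigma> t s (U \<sigma> s \<tau> x)" using Ucomp[OF \<sigma> st] by simp
      obtain \<sigma>' where \<sigma>': "\<sigma>' \<in> Sig" "U \<sigma> t s = U \<sigma>' (t - s) 0" using normalize[OF \<sigma> st(2)] by blast
      have "t - s \<ge> L" using tt by (auto simp: s_def)
      hence fr: "dist (U \<sigma> t \<tau> x) a \<ge> r" using far[OF \<sigma>'(1) _ y] eq \<sigma>'(2) by simp
      have "L2 \<le> t - \<tau>" using tt by linarith
      then obtain k where k: "k \<in> A" "dist (U \<sigma> t \<tau> x) k < min e (r/2)"
        using L2[of \<tau> t \<sigma> x] tt \<sigma> x by blast
      have "dist a (U \<sigma> t \<tau> x) \<le> dist a k + dist k (U \<sigma> t \<tau> x)" by (rule dist_triangle)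
      hence "dist a k \<ge> r/2" using fr k(2) by (simp add: dist_commute)
      hence "k \<in> A'" using k(1) by (simp add: A'_def)
      thus "\<exists>k\<in>A'. dist (U \<sigma> t \<tau> x) k < e" using k(2) by auto
    qed
  qed
  hence "A \<subseteq> A'" using minA cA' by blast
  thus False using assms by (auto simp: A'_def)
qed

lemma approx_seq:
  assumes "a \<in> A"
  shows "\<exists>\<sigma>s s w. (\<forall>n. \<sigma>s n \<in> Sig) \<and> (\<forall>n. w n \<in> B1) \<and> (\<forall>n. real n \<le> s n)
     \<and> (\<lambda>n. U (\<sigma>s n) (s n) 0 (w n)) \<longlonglongrightarrow> a"
proof -
  have "\<forall>n. \<exists>p. fst p \<in> Sig \<and> fst (snd p) \<ge> real n \<and> snd (snd p) \<in> B1 \<and>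
      dist (U (fst p) (fst (snd p)) 0 (snd (snd p))) a < inverse (real (Suc n))"
  proof
    fix n
    obtain \<sigma> s x where "\<sigma> \<in> Sig" "s \<ge> real n" "x \<in> B1" "dist (U \<sigma> s 0 x) a < inverse (real (Suc n))"
      using approx_claim[OF assms, of "inverse (real (Suc n))" "real n"] by auto
    thus "\<exists>p. fst p \<in> Sig \<and> fst (snd p) \<ge> real n \<and> snd (snd p) \<in> B1 \<and>
      dist (U (fst p) (fst (snd p)) 0 (snd (snd p))) a < inverse (real (Suc n))"
      by (intro exI[of _ "(\<sigma>, s, x)"]) simp
  qed
  then obtain p where p: "\<And>n. fst (p n) \<in> Sig \<and> fst (snd (p n)) \<ge> real n \<and> snd (snd (p n)) \<in> B1 \<and>
      dist (U (fst (p n)) (fst (snd (p n))) 0 (snd (snd (p n)))) a < inverse (real (Suc n))"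
    by metis
  have lim: "(\<lambda>n. U (fst (p n)) (fst (snd (p n))) 0 (snd (snd (p n)))) \<longlonglongrightarrow> a"
    unfolding lim_sequentially
  proof (intro allI impI)
    fix e :: real assume "e > 0"
    then obtain N where N: "inverse (real (Suc N)) < e" using reals_Archimedean by blast
    have "\<forall>n\<ge>N. dist (U (fst (p n)) (fst (snd (p n))) 0 (snd (snd (p n)))) a < e"
    proof (intro allI impI)
      fix n assume "n \<ge> N"
      hence i: "inverse (real (Suc n)) \<le> inverse (real (Suc N))" by (intro le_imp_inverse_le) auto
      have d: "dist (U (fst (p n)) (fst (snd (p n))) 0 (snd (snd (p n)))) a < inverse (real (Suc n))"
        using p[of n] by blast
      show "dist (U (fst (p n)) (fst (snd (p n))) 0 (snd (snd (p n)))) a < e" using d i N by linarith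
    qed
    thus "\<exists>no. \<forall>n\<ge>no. dist (U (fst (p n)) (fst (snd (p n))) 0 (snd (snd (p n)))) a < e" by blast
  qed
  show ?thesis
    by (intro exI[of _ "\<lambda>n. fst (p n)"] exI[of _ "\<lambda>n. fst (snd (p n))"] exI[of _ "\<lambda>n. snd (snd (p n))"])
      (use p lim in auto)
qed

definition Good :: "'b \<Rightarrow> 'a \<Rightarrow> bool" where
  "Good \<sigma>' \<xi> \<longleftrightarrow> (\<exists>\<sigma>s s w. (\<forall>n. \<sigma>s n \<in> Sig) \<and> (\<forall>n. w n \<in> B1) \<and> (\<forall>n. 0 \<le> s n) \<and>
     filterlim s at_top sequentially \<and> (\<lambda>n. T (s n) (\<sigma>s n)) \<longlonglongrightarrow> \<sigma>' \<and>
     (\<lambda>n. U (\<sigma>s n) (s n) 0 (w n)) \<longlonglongrightarrow> \<xi>)"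

lemma Good_init: assumes "a \<in> A" shows "\<exists>\<sigma>'. Good \<sigma>' a"
proof -
  obtain \<sigma>s s w where sw: "\<And>n. \<sigma>s n \<in> Sig" "\<And>n. w n \<in> B1" "\<And>n. real n \<le> s n"
    "(\<lambda>n. U (\<sigma>s n) (s n) 0 (w n)) \<longlonglongrightarrow> a"
    using approx_seq[OF assms] by blast
  have s0: "0 \<le> s n" for n using sw(3)[of n] by linarith
  have fs: "filterlim s at_top sequentially"
    by (rule filterlim_at_top_mono[OF filterlim_real_sequentially]) (use sw(3) in auto)
  have "\<forall>n. T (s n) (\<sigma>s n) \<in> Sig" using TSig s0 sw(1) by blast
  then obtain \<sigma>' r where r: "\<sigma>' \<in> Sig" "strict_mono r" "((\<lambda>n. T (s n) (\<sigma>s n)) \<circ> r) \<longlonglongrightarrow> \<sigma>'"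
    using seq_compactE[OF compact_imp_seq_compact[OF cSig]] by metis
  have "Good \<sigma>' a"
    unfolding Good_def
  proof (intro exI[of _ "\<sigma>s \<circ> r"] exI[of _ "s \<circ> r"] exI[of _ "w \<circ> r"] conjI)
    show "filterlim (s \<circ> r) at_top sequentially"
      unfolding o_def by (rule filterlim_compose[OF fs filterlim_subseq[OF r(2)]])
    show "(\<lambda>n. U ((\<sigma>s \<circ> r) n) ((s \<circ> r) n) 0 ((w \<circ> r) n)) \<longlonglongrightarrow> a"
      using LIMSEQ_subseq_LIMSEQ[OF sw(4) r(2)] by (simp add: o_def)
  qed (use sw s0 r in \<open>auto simp: o_def\<close>)
  thus ?thesis by blast
qed

lemma Good_Sig: "Good \<sigma>' \<xi> \<Longrightarrow> \<sigma>' \<in> Sig"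
  unfolding Good_def
proof (elim exE conjE)
  fix \<sigma>s s w assume a: "\<forall>n. \<sigma>s n \<in> Sig" "\<forall>n. 0 \<le> s n" "(\<lambda>n. T (s n) (\<sigma>s n)) \<longlonglongrightarrow> \<sigma>'"
  have "\<forall>n. T (s n) (\<sigma>s n) \<in> Sig" using TSig a by blast
  show "\<sigma>' \<in> Sig" by (rule closed_sequentially[OF compact_imp_closed[OF cSig]]) (use \<open>\<forall>n. T (s n) (\<sigma>s n) \<in> Sig\<close> a(3) in auto)
qed

lemma Good_A: "Good \<sigma>' \<xi> \<Longrightarrow> \<xi> \<in> A"
  unfolding Good_def
proof (elim exE conjE)
  fix \<sigma>s s w assume a: "\<forall>n. \<sigma>s n \<in> Sig" "\<forall>n. w n \<in> B1" "\<forall>n. 0 \<le> s n" "filterlim s at_top sequentially"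
    "(\<lambda>n. U (\<sigma>s n) (s n) 0 (w n)) \<longlonglongrightarrow> \<xi>"
  have "near (\<lambda>n. U (\<sigma>s n) (s n) 0 (w n))"
    by (rule near_U[OF _ bounded_B1]) (use a in auto)
  thus "\<xi> \<in> A" using near_lim a(5) by blast
qed


lemma Good_step:
  assumes "Good \<sigma>' \<xi>"
  shows "\<exists>\<sigma>'' \<xi>''. Good \<sigma>'' \<xi>'' \<and> T (hh 1) \<sigma>'' = \<sigma>' \<and> U \<sigma>'' (hh 1) 0 \<xi>'' = \<xi>"
proof -
  define H where "H = hh 1"
  have Hpos: "0 < H" using h1pos by (simp add: H_def)
  obtain \<sigma>s s w where a: "\<forall>n. \<sigma>s n \<in> Sig" "\<forall>n. w n \<in> B1" "\<forall>n. 0 \<le> s n" "filterlim s at_top sequentially"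
    "(\<lambda>n. T (s n) (\<sigma>s n)) \<longlonglongrightarrow> \<sigma>'" "(\<lambda>n. U (\<sigma>s n) (s n) 0 (w n)) \<longlonglongrightarrow> \<xi>"
    using assms unfolding Good_def by blast
  have "eventually (\<lambda>n. H \<le> s n) sequentially" using a(4) by (simp add: filterlim_at_top)
  then obtain N where N: "\<And>n. n \<ge> N \<Longrightarrow> H \<le> s n" by (auto simp: eventually_sequentially)
  define \<sigma>2 where "\<sigma>2 n = \<sigma>s (n + N)" for n
  define w2 where "w2 n = w (n + N)" for n
  define s2 where "s2 n = s (n + N) - H" for n
  have s2: "0 \<le> s2 n" for n using N[of "n+N"] by (simp add: s2_def)
  have \<sigma>2S: "\<sigma>2 n \<in> Sig" for n using a(1) by (simp add: \<sigma>2_def)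
  have w2B: "w2 n \<in> B1" for n using a(2) by (simp add: w2_def)
  have fs2: "filterlim s2 at_top sequentially"
    unfolding filterlim_at_top
  proof
    fix Z
    have "eventually (\<lambda>n. Z + H \<le> s n) sequentially" using a(4) by (simp add: filterlim_at_top)
    then obtain M where M: "\<And>n. n \<ge> M \<Longrightarrow> Z + H \<le> s n" by (auto simp: eventually_sequentially)
    show "eventually (\<lambda>n. Z \<le> s2 n) sequentially"
      unfolding eventually_sequentially
    proof (intro exI[of _ M] allI impI)
      fix n assume "n \<ge> M"
      hence "Z + H \<le> s (n + N)" using M by simp
      thus "Z \<le> s2 n" by (simp add: s2_def)
    qed
  qed
  define \<tau> where "\<tau> n = T (s2 n) (\<sigma>2 n)" for n
  have \<tau>S: "\<tau> n \<in> Sig" for n using TSig s2 \<sigma>2S by (simp add: \<tau>_def)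
  define F where "F k n = U (\<sigma>2 n) (s2 n + \<bar>hh k\<bar>) 0 (w2 n)" for k n
  have nearF: "near (F k)" for k
  proof -
    have "filterlim (\<lambda>n. s2 n + \<bar>hh k\<bar>) at_top sequentially"
      using filterlim_tendsto_add_at_top[OF tendsto_const fs2, of "\<bar>hh k\<bar>"] by (simp add: add.commute)
    hence "near (\<lambda>n. U (\<sigma>2 n) (s2 n + \<bar>hh k\<bar>) ((\<lambda>n. 0) n) (w2 n))"
      by (intro near_U[OF _ bounded_B1]) (use \<sigma>2S w2B s2 in auto)
    thus ?thesis by (simp add: F_def[abs_def])
  qed
  obtain \<sigma>'' r0 where r0: "\<sigma>'' \<in> Sig" "strict_mono r0" "(\<tau> \<circ> r0) \<longlonglongrightarrow> \<sigma>''"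
    using seq_compactE[OF compact_imp_seq_compact[OF cSig], of \<tau>] \<tau>S by metis
  have nf: "\<And>k. near (\<lambda>n. F k (r0 n))" using near_subseq[OF nearF r0(2)] by (simp add: o_def)
  from diag[of "\<lambda>k n. F k (r0 n)", OF nf] obtain r1 where r1: "strict_mono r1" "\<And>k. convergent ((\<lambda>n. F k (r0 n)) \<circ> r1)"
    by blast
  define r where "r = r0 \<circ> r1"
  have r: "strict_mono r" unfolding r_def using r0(2) r1(1) by (rule strict_mono_o)
  define \<xi>k where "\<xi>k k = lim (\<lambda>n. F k (r n))" for k
  have conv: "(\<lambda>n. F k (r n)) \<longlonglongrightarrow> \<xi>k k" for k
    using r1(2)[of k] unfolding \<xi>k_def convergent_LIMSEQ_iff by (simp add: r_def o_def)
  have \<tau>r: "(\<lambda>n. \<tau> (r n)) \<longlonglongrightarrow> \<sigma>''"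
    using LIMSEQ_subseq_LIMSEQ[OF r0(3) r1(1)] by (simp add: r_def o_def)
  have key: "U (\<tau> n) (hh k) 0 (F 0 n) = F k n" if "k \<in> I" for k n
  proof -
    have hk: "0 \<le> hh k" using hnn that by blast
    have e1: "U (\<sigma>2 n) (s2 n + hh k) (s2 n + 0) = U (\<tau> n) (hh k) 0"
      unfolding \<tau>_def by (rule shift) (use \<sigma>2S s2 hk in auto)
    have e2: "U (\<sigma>2 n) (s2 n + hh k) 0 = U (\<sigma>2 n) (s2 n + hh k) (s2 n) \<circ> U (\<sigma>2 n) (s2 n) 0"
      by (rule Ucomp) (use \<sigma>2S s2 hk in auto)
    have "F k n = U (\<sigma>2 n) (s2 n + hh k) 0 (w2 n)" using hk by (simp add: F_def)
    also have "\<dots> = U (\<sigma>2 n) (s2 n + hh k) (s2 n) (U (\<sigma>2 n) (s2 n) 0 (w2 n))" using e2 by simp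
    also have "\<dots> = U (\<tau> n) (hh k) 0 (F 0 n)" using e1 by (simp add: F_def h0)
    finally show ?thesis by simp
  qed
  have prem: "(\<forall>n. \<tau> (r n) \<in> Sig) \<and> \<sigma>'' \<in> Sig \<and> (\<lambda>n. \<tau> (r n)) \<longlonglongrightarrow> \<sigma>'' \<and>
     (\<forall>k\<in>I. (\<lambda>n. U (\<tau> (r n)) (hh k) 0 (F 0 (r n))) \<longlonglongrightarrow> \<xi>k k)"
    using \<tau>S r0(1) \<tau>r conv key by simp
  have "\<forall>k\<in>I. U \<sigma>'' (hh k) 0 (\<xi>k 0) = \<xi>k k"
    using clos[unfolded asymptotically_closed_def, THEN spec[of _ "\<lambda>n. \<tau> (r n)"],
        THEN spec[of _ \<sigma>''], THEN spec[of _ "\<lambda>n. F 0 (r n)"], THEN spec[of _ \<xi>k]] prem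
    by (rule mp)
  hence app: "U \<sigma>'' H 0 (\<xi>k 0) = \<xi>k 1" using oneI by (simp add: H_def)
  have "(\<lambda>n. F 1 (r n)) \<longlonglongrightarrow> \<xi>"
  proof -
    have "(\<lambda>n. U (\<sigma>s (n + N)) (s (n + N)) 0 (w (n + N))) \<longlonglongrightarrow> \<xi>"
      using LIMSEQ_ignore_initial_segment[OF a(6)] .
    from LIMSEQ_subseq_LIMSEQ[OF this r] show ?thesis
      using Hpos by (simp add: F_def o_def \<sigma>2_def w2_def s2_def H_def)
  qed
  hence x1: "\<xi>k 1 = \<xi>" using conv[of 1] LIMSEQ_unique by blast
  have "(T H \<circ> (\<lambda>n. \<tau> (r n))) \<longlonglongrightarrow> T H \<sigma>''"
    apply (rule cont[unfolded continuous_on_sequentially H_def[symmetric], rule_format])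
    using r0(1) \<tau>S \<tau>r by auto
  hence "(\<lambda>n. T H (\<tau> (r n))) \<longlonglongrightarrow> T H \<sigma>''" by (simp add: o_def)
  moreover have "(\<lambda>n. T H (\<tau> (r n))) \<longlonglongrightarrow> \<sigma>'"
  proof -
    have "T H (\<tau> n) = T (s (n + N)) (\<sigma>s (n + N))" for n
    proof -
      have "T (H + s2 n) (\<sigma>2 n) = T H (T (s2 n) (\<sigma>2 n))"
        by (rule Tadd) (use Hpos s2 \<sigma>2S in auto)
      thus ?thesis by (simp add: \<tau>_def s2_def \<sigma>2_def)
    qed
    moreover have "(\<lambda>n. T (s (n + N)) (\<sigma>s (n + N))) \<longlonglongrightarrow> \<sigma>'"
      using LIMSEQ_ignore_initial_segment[OF a(5)] .
    ultimately have "(\<lambda>n. T H (\<tau> n)) \<longlonglongrightarrow> \<sigma>'" by simp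
    from LIMSEQ_subseq_LIMSEQ[OF this r] show ?thesis by (simp add: o_def)
  qed
  ultimately have TH: "T H \<sigma>'' = \<sigma>'" using LIMSEQ_unique by blast
  have "Good \<sigma>'' (\<xi>k 0)"
    unfolding Good_def
  proof (intro exI[of _ "\<sigma>2 \<circ> r"] exI[of _ "s2 \<circ> r"] exI[of _ "w2 \<circ> r"] conjI)
    show "filterlim (s2 \<circ> r) at_top sequentially"
      unfolding o_def by (rule filterlim_compose[OF fs2 filterlim_subseq[OF r]])
    show "(\<lambda>n. T ((s2 \<circ> r) n) ((\<sigma>2 \<circ> r) n)) \<longlonglongrightarrow> \<sigma>''"
      using \<tau>r by (simp add: \<tau>_def)
    show "(\<lambda>n. U ((\<sigma>2 \<circ> r) n) ((s2 \<circ> r) n) 0 ((w2 \<circ> r) n)) \<longlonglongrightarrow> \<xi>k 0"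
      using conv[of 0] by (simp add: F_def h0)
  qed (use \<sigma>2S w2B s2 in auto)
  thus ?thesis using TH app x1 by (auto simp: H_def)
qed


lemma kernel_sub:
  assumes "a \<in> A"
  shows "\<exists>\<sigma>\<in>Sig. a \<in> kernel_section U \<sigma> 0"
proof -
  define H where "H = hh 1"
  have Hpos: "0 < H" using h1pos by (simp add: H_def)
  define nxt where "nxt p = (SOME q. Good (fst q) (snd q) \<and> T H (fst q) = fst p \<and> U (fst q) H 0 (snd q) = snd p)"
    for p :: "'b \<times> 'a"
  have nxt: "Good (fst (nxt p)) (snd (nxt p)) \<and> T H (fst (nxt p)) = fst p \<and> U (fst (nxt p)) H 0 (snd (nxt p)) = snd p"
    if gp: "Good (fst p) (snd p)" for p
  proof -
    obtain \<sigma>'' \<xi>'' where q: "Good \<sigma>'' \<xi>''" "T (hh 1) \<sigma>'' = fst p" "U \<sigma>'' (hh 1) 0 \<xi>'' = snd p"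
      using Good_step[OF gp] by blast
    have "\<exists>q. Good (fst q) (snd q) \<and> T H (fst q) = fst p \<and> U (fst q) H 0 (snd q) = snd p"
      by (rule exI[of _ "(\<sigma>'', \<xi>'')"]) (use q in \<open>simp add: H_def\<close>)
    thus ?thesis unfolding nxt_def by (rule someI_ex)
  qed
  obtain \<sigma>0 where g0: "Good \<sigma>0 a" using Good_init[OF assms] by blast
  define ch where "ch m = (nxt ^^ m) (\<sigma>0, a)" for m
  define \<sigma>m where "\<sigma>m m = fst (ch m)" for m
  define \<xi>m where "\<xi>m m = snd (ch m)" for m
  have chS: "ch (Suc m) = nxt (ch m)" for m by (simp add: ch_def)
  have ch0: "\<sigma>m 0 = \<sigma>0" "\<xi>m 0 = a" by (simp_all add: \<sigma>m_def \<xi>m_def ch_def)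
  have good: "Good (\<sigma>m m) (\<xi>m m)" for m
  proof (induction m)
    case 0 thus ?case using g0 ch0 by simp
  next
    case (Suc m)
    thus ?case using nxt[of "ch m"] by (simp add: \<sigma>m_def \<xi>m_def chS)
  qed
  have stepT: "T H (\<sigma>m (Suc m)) = \<sigma>m m" and stepU: "U (\<sigma>m (Suc m)) H 0 (\<xi>m (Suc m)) = \<xi>m m" for m
    using nxt[of "ch m"] good[of m] by (simp_all add: \<sigma>m_def \<xi>m_def chS)
  have \<sigma>mS: "\<sigma>m m \<in> Sig" for m using Good_Sig good by blast
  have \<xi>mA: "\<xi>m m \<in> A" for m using Good_A good by blast
  have \<sigma>0S: "\<sigma>0 \<in> Sig" using \<sigma>mS[of 0] ch0 by simp
  have Tm: "T (real m * H) (\<sigma>m m) = \<sigma>0" for m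
  proof (induction m)
    case 0 thus ?case using T0 \<sigma>mS[of 0] ch0 by simp
  next
    case (Suc m)
    have "T (real m * H + H) (\<sigma>m (Suc m)) = T (real m * H) (T H (\<sigma>m (Suc m)))"
      by (rule Tadd) (use Hpos \<sigma>mS in auto)
    also have "\<dots> = \<sigma>0" using stepT Suc by simp
    finally show ?case by (simp add: algebra_simps)
  qed
  define p where "p m = - (real m * H)" for m
  have pdec: "p m' \<le> p m" if "m \<le> m'" for m m'
    using that Hpos by (simp add: p_def mult_right_mono)
  have backU: "U \<sigma>0 (p m) (p (Suc m)) (\<xi>m (Suc m)) = \<xi>m m" for m
  proof -
    have "U (\<sigma>m (Suc m)) (real (Suc m) * H + p m) (real (Suc m) * H + p (Suc m))
        = U (T (real (Suc m) * H) (\<sigma>m (Suc m))) (p m) (p (Suc m))"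
      by (rule shift) (use \<sigma>mS Hpos pdec[of m "Suc m"] in auto)
    moreover have "real (Suc m) * H + p m = H" "real (Suc m) * H + p (Suc m) = 0"
      by (simp_all add: p_def algebra_simps)
    ultimately have "U \<sigma>0 (p m) (p (Suc m)) = U (\<sigma>m (Suc m)) H 0" using Tm[of "Suc m"] by simp
    thus ?thesis using stepU by simp
  qed
  define V where "V t m = U \<sigma>0 t (p m) (\<xi>m m)" for t m
  have Vj: "V t (m + j) = V t m" if "p m \<le> t" for t m j
  proof (induction j)
    case 0 thus ?case by simp
  next
    case (Suc j)
    have le: "p (Suc (m + j)) \<le> p (m + j)" "p (m + j) \<le> t"
      using pdec[of "m+j" "Suc (m+j)"] pdec[of m "m+j"] that by auto
    have "V t (m + Suc j) = U \<sigma>0 t (p (m + j)) (U \<sigma>0 (p (m + j)) (p (Suc (m + j))) (\<xi>m (Suc (m + j))))"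
      using Ucomp[OF \<sigma>0S le(1) le(2)] by (simp add: V_def)
    also have "\<dots> = V t (m + j)" using backU[of "m + j"] by (simp add: V_def)
    finally show ?case using Suc by simp
  qed
  have Vind: "V t m = V t m'" if "p m \<le> t" "p m' \<le> t" for t m m'
  proof -
    have "V t (m + (max m m' - m)) = V t m" by (rule Vj[OF that(1)])
    moreover have "V t (m' + (max m m' - m')) = V t m'" by (rule Vj[OF that(2)])
    ultimately show ?thesis by (simp add: max_def split: if_splits)
  qed
  have exm: "\<exists>m. c \<le> real m * H" for c
  proof -
    obtain n where "c / H \<le> real n" using real_arch_simple by blast
    hence "c \<le> real n * H" using Hpos by (simp add: pos_divide_le_eq)
    thus ?thesis by blast
  qed
  have exp: "\<exists>m. p m \<le> t" for t
  proof -
    obtain m where "-t \<le> real m * H" using exm by blast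
    hence "p m \<le> t" by (simp add: p_def)
    thus ?thesis by blast
  qed
  define x where "x t = V t (SOME m. p m \<le> t)" for t
  have xV: "x t = V t m" if "p m \<le> t" for t m
  proof -
    have "p (SOME m. p m \<le> t) \<le> t" using someI_ex[OF exp[of t]] .
    thus ?thesis unfolding x_def using Vind that by blast
  qed
  have traj: "x s = U \<sigma>0 s \<tau> (x \<tau>)" if "\<tau> \<le> s" for s \<tau>
  proof -
    obtain m where m: "p m \<le> \<tau>" using exp by blast
    have "x s = V s m" using xV m that by simp
    also have "\<dots> = U \<sigma>0 s \<tau> (U \<sigma>0 \<tau> (p m) (\<xi>m m))"
      using Ucomp[OF \<sigma>0S m that] by (simp add: V_def)
    also have "\<dots> = U \<sigma>0 s \<tau> (x \<tau>)" using xV[OF m] by (simp add: V_def)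
    finally show ?thesis .
  qed
  have x0: "x 0 = a"
  proof -
    have "x 0 = V 0 0" by (rule xV) (simp add: p_def)
    thus ?thesis using Uid[OF \<sigma>0S] ch0 by (simp add: V_def p_def)
  qed
  have bA: "bounded A" using cA by (rule compact_imp_bounded)
  obtain L where L: "\<forall>t \<tau> \<sigma> y. \<tau> \<le> t \<longrightarrow> L \<le> t - \<tau> \<longrightarrow> \<sigma> \<in> Sig \<longrightarrow> y \<in> A \<longrightarrow> (\<exists>k\<in>A. dist (U \<sigma> t \<tau> y) k < 1)"
    using attA'[OF bA zero_less_one] by blast
  have "range x \<subseteq> B1"
  proof
    fix y assume "y \<in> range x"
    then obtain t where yt: "y = x t" by blast
    obtain m where m: "max (-t) (L - t) \<le> real m * H" using exm by blast
    have pm: "p m \<le> t" "L \<le> t - p m" using m by (auto simp: p_def)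
    have "x t = U \<sigma>0 t (p m) (\<xi>m m)" using xV[OF pm(1)] by (simp add: V_def)
    moreover have "\<exists>k\<in>A. dist (U \<sigma>0 t (p m) (\<xi>m m)) k < 1"
      using L pm \<sigma>0S \<xi>mA by blast
    ultimately show "y \<in> B1" using yt by (simp add: B1_def)
  qed
  hence "bounded (range x)" using bounded_B1 bounded_subset by blast
  hence "complete_bounded_trajectory U \<sigma>0 x"
    unfolding complete_bounded_trajectory_def using traj by blast
  hence "a \<in> kernel_section U \<sigma>0 0" unfolding kernel_section_def using x0 by force
  thus ?thesis using \<sigma>0S by blast
qed

lemma kernel_sup:
  assumes "\<sigma> \<in> Sig" "y \<in> kernel_section U \<sigma> 0"
  shows "y \<in> A"
proof -
  obtain x where x: "complete_bounded_trajectory U \<sigma> x" "y = x 0"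
    using assms(2) unfolding kernel_section_def by blast
  have bx: "bounded (range x)" and tr: "\<And>s \<tau>. \<tau> \<le> s \<Longrightarrow> x s = U \<sigma> s \<tau> (x \<tau>)"
    using x(1) unfolding complete_bounded_trajectory_def by blast+
  have "y \<in> closure A"
    unfolding closure_approachable
  proof (intro allI impI)
    fix e :: real assume e: "e > 0"
    obtain L where L: "\<forall>t \<tau> \<sigma>' z. \<tau> \<le> t \<longrightarrow> L \<le> t - \<tau> \<longrightarrow> \<sigma>' \<in> Sig \<longrightarrow> z \<in> range x \<longrightarrow> (\<exists>k\<in>A. dist (U \<sigma>' t \<tau> z) k < e)"
      using attA'[OF bx e] by blast
    define \<tau> where "\<tau> = - max L 0"
    have t: "\<tau> \<le> 0" "L \<le> 0 - \<tau>" by (auto simp: \<tau>_def)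
    have "\<exists>k\<in>A. dist (U \<sigma> 0 \<tau> (x \<tau>)) k < e" using L t assms(1) by blast
    moreover have "U \<sigma> 0 \<tau> (x \<tau>) = y" using tr[OF t(1)] x(2) by simp
    ultimately show "\<exists>k\<in>A. dist k y < e" by (auto simp: dist_commute)
  qed
  thus ?thesis using closedA by simp
qed

end

theorem theorem6p6:
  fixes Sig :: "'b::metric_space set"
    and T :: "real \<Rightarrow> 'b \<Rightarrow> 'b"
    and U :: "'b \<Rightarrow> real \<Rightarrow> real \<Rightarrow> 'a::metric_space \<Rightarrow> 'a"
    and A :: "'a set"
    and I :: "nat set" and h :: "nat \<Rightarrow> real"
  assumes "compact Sig"
    and "semigroup_on Sig T"
    and "\<forall>h\<ge>0. T h ` Sig = Sig"
    and "process_family Sig U"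
    and "\<forall>\<sigma>\<in>Sig. \<forall>h\<ge>0. \<forall>t \<tau>. \<tau> \<le> t \<longrightarrow> U \<sigma> (h + t) (h + \<tau>) = U (T h \<sigma>) t \<tau>"
    and "uniformly_asymptotically_compact Sig U"
    and "uniform_global_attractor Sig U A"
    and "admissible_seq I h"
    and "asymptotically_closed Sig U I h"
    and "\<forall>k\<in>I. continuous_on Sig (T (h k))"
  shows "A = (\<Union>\<sigma>\<in>Sig. kernel_section U \<sigma> 0)"
proof -
  have I01: "0 \<in> I" "1 \<in> I" using assms(8) unfolding admissible_seq_def by auto
  have smo: "strict_mono_on I h" and h0: "h 0 = 0" using assms(8) by (auto simp: admissible_seq_def)
  have h1: "0 < h 1" using strict_mono_onD[OF smo I01(1) I01(2)] h0 by simp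
  have hnn: "0 \<le> h k" if "k \<in> I" for k
  proof (cases "k = 0")
    case True thus ?thesis using h0 by simp
  next
    case False
    thus ?thesis using strict_mono_onD[OF smo I01(1) that] h0 by simp
  qed
  interpret ctx Sig T U A I h
  proof
    show "compact Sig" by (rule assms(1))
    show "\<And>h. 0 \<le> h \<Longrightarrow> T h ` Sig = Sig" using assms(3) by blast
    show "\<And>\<sigma>. \<sigma> \<in> Sig \<Longrightarrow> T 0 \<sigma> = \<sigma>" using assms(2) unfolding semigroup_on_def by blast
    show "\<And>h1 h2 \<sigma>. 0 \<le> h1 \<Longrightarrow> 0 \<le> h2 \<Longrightarrow> \<sigma> \<in> Sig \<Longrightarrow> T (h1 + h2) \<sigma> = T h1 (T h2 \<sigma>)"
      using assms(2) unfolding semigroup_on_def by blast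
    show "\<And>\<sigma> \<tau>. \<sigma> \<in> Sig \<Longrightarrow> U \<sigma> \<tau> \<tau> = id" using assms(4) unfolding process_family_def by blast
    show "\<And>\<sigma> t s \<tau>. \<sigma> \<in> Sig \<Longrightarrow> \<tau> \<le> s \<Longrightarrow> s \<le> t \<Longrightarrow> U \<sigma> t \<tau> = U \<sigma> t s \<circ> U \<sigma> s \<tau>"
      using assms(4) unfolding process_family_def by blast
    show "\<And>\<sigma> h t \<tau>. \<sigma> \<in> Sig \<Longrightarrow> 0 \<le> h \<Longrightarrow> \<tau> \<le> t \<Longrightarrow> U \<sigma> (h + t) (h + \<tau>) = U (T h \<sigma>) t \<tau>"
      using assms(5) by blast
    show "compact A" using assms(7) unfolding uniform_global_attractor_def by blast
    show "uniformly_attracting Sig U A" using assms(7) unfolding uniform_global_attractor_def by blast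
    show "\<And>K. compact K \<Longrightarrow> uniformly_attracting Sig U K \<Longrightarrow> A \<subseteq> K"
      using assms(7) unfolding uniform_global_attractor_def by blast
    show "h 0 = 0" by (rule h0)
    show "0 < h 1" by (rule h1)
    show "\<And>k. k \<in> I \<Longrightarrow> 0 \<le> h k" by (rule hnn)
    show "1 \<in> I" by (rule I01(2))
    show "asymptotically_closed Sig U I h" by (rule assms(9))
    show "continuous_on Sig (T (h 1))" using assms(10) I01(2) by blast
  qed
  show ?thesis
  proof
    show "A \<subseteq> (\<Union>\<sigma>\<in>Sig. kernel_section U \<sigma> 0)" using kernel_sub by blast
    show "(\<Union>\<sigma>\<in>Sig. kernel_section U \<sigma> 0) \<subseteq> A" using kernel_sup by blast
  qed
qed

end
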